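(* Let $a_1,\ldots,a_k\ge 0$ and $d\in\mathbb{R}$, let $\mathbf{x}=[x_1,\ldots,x_k]^T\in\mathbb{R}^k$, and for $l=1,\ldots,k$ let $\mathbf{a}_l=[a_1,\ldots,a_l,0,\ldots,0]^T\in\mathbb{R}^k$. For $1\le l<k$ let $y_l=a_{l+1}\,\mathbf{a}_l^T\mathbf{x}-\|\mathbf{a}_l\|^2x_{l+1}$. If $\mathbf{a}_{l+1}^T\mathbf{x}>\tfrac12 d\|\mathbf{a}_{l+1}\|^2$ and $y_l>0$, then $\mathbf{a}_l^T\mathbf{x}>\tfrac12 d\|\mathbf{a}_l\|^2$. *)

theory Defs
  imports "HOL-Analysis.Analysis"
begin

text \<open>Vectors in R^k are represented as functions nat => real, with components 1..k.
  trunc_vec a l is the vector [a_1,...,a_l,0,...,0].\<close>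

definition trunc_vec :: "(nat \<Rightarrow> real) \<Rightarrow> nat \<Rightarrow> nat \<Rightarrow> real" where
  "trunc_vec a l = (\<lambda>i. if i \<le> l then a i else 0)"

definition dotk :: "nat \<Rightarrow> (nat \<Rightarrow> real) \<Rightarrow> (nat \<Rightarrow> real) \<Rightarrow> real" where
  "dotk k u v = (\<Sum>i=1..k. u i * v i)"

definition normsqk :: "nat \<Rightarrow> (nat \<Rightarrow> real) \<Rightarrow> real" where
  "normsqk k u = (\<Sum>i=1..k. (u i)^2)"

end

theory Submission
  imports Defs
begin

theorem lemma2:
  fixes k l :: nat and a x :: "nat \<Rightarrow> real" and d :: real
  assumes "\<forall>i\<in>{1..k}. a i \<ge> 0"
    and "1 \<le> l" and "l < k"
    and "dotk k (trunc_vec a (l+1)) x > d / 2 * normsqk k (trunc_vec a (l+1))"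
    and "a (l+1) * dotk k (trunc_vec a l) x - normsqk k (trunc_vec a l) * x (l+1) > 0"
  shows "dotk k (trunc_vec a l) x > d / 2 * normsqk k (trunc_vec a l)"
proof -
  define S where "S = dotk k (trunc_vec a l) x"
  define N where "N = normsqk k (trunc_vec a l)"
  define b where "b = a (l+1)"
  define t where "t = x (l+1)"
  have mem: "l+1 \<in> {1..k}" using assms(2,3) by auto
  have b0: "b \<ge> 0" using assms(1) mem b_def by auto
  have e1: "\<And>i. trunc_vec a (l+1) i * x i = trunc_vec a l i * x i + (if i = l+1 then b*t else 0)"
    by (auto simp: trunc_vec_def b_def t_def)
  have e2: "\<And>i. (trunc_vec a (l+1) i)^2 = (trunc_vec a l i)^2 + (if i = l+1 then b^2 else 0)"
    by (auto simp: trunc_vec_def b_def)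
  have A: "dotk k (trunc_vec a (l+1)) x = S + b*t"
    unfolding dotk_def S_def using mem
    by (simp only: e1 sum.distrib sum.delta sum.delta' finite_atLeastAtMost if_True)
  have B: "normsqk k (trunc_vec a (l+1)) = N + b^2"
    unfolding normsqk_def N_def using mem
    by (simp only: e2 sum.distrib sum.delta sum.delta' finite_atLeastAtMost if_True)
  have h4: "S + b*t > d/2 * (N + b^2)" using assms(4) A B by simp
  have h5: "b*S - N*t > 0" using assms(5) S_def N_def b_def t_def by simp
  have N0: "N \<ge> 0" unfolding N_def normsqk_def by (simp add: sum_nonneg)
  have Npos: "N > 0"
  proof (rule ccontr)
    assume "\<not> N > 0"
    then have "N = 0" using N0 by simp
    then have "\<forall>i\<in>{1..k}. (trunc_vec a l i)^2 = 0"
      unfolding N_def normsqk_def by (subst (asm) sum_nonneg_eq_0_iff) auto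
    then have "S = 0" unfolding S_def dotk_def by (intro sum.neutral) auto
    with h5 \<open>N = 0\<close> show False by simp
  qed
  have "b*(N*t) \<le> b*(b*S)" using h5 b0 by (intro mult_left_mono) auto
  then have "N*(S+b*t) \<le> S*(N+b^2)" by (simp add: algebra_simps power2_eq_square)
  moreover have "N*(d/2*(N+b^2)) < N*(S+b*t)" using h4 Npos by simp
  ultimately have "(N+b^2)*(d/2*N) < (N+b^2)*S" by (simp add: algebra_simps)
  then have "d/2*N < S"
    using Npos by (meson mult_less_cancel_left_pos add_pos_nonneg zero_le_power2)
  then show ?thesis using S_def N_def by simp
qed

end
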